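(* Let $\{(X_n,M_n,\cdot)\}_{n\in\mathbb N}$ be a sequence of nonempty compact non-Archimedean fuzzy metric spaces with the product $t$-norm $\cdot$, satisfying: (1) there exists a nondecreasing left-continuous function $C:(0,\infty)\to(0,1]$ with $0<C(s)\le\mathrm{diam}_s(X_n)$ for all $s>0$ and all $n$; (2) for every $t>0$ and $0<\varepsilon<1$ there is $N(\varepsilon,t)\in\mathbb N$ with $\mathrm{Cov}(X_n,\varepsilon,t)\le N(\varepsilon,t)$ for all $n$; (3) for every $t>0$ and $0<\varepsilon<1$, with $N=N(\varepsilon,t)$, there exist, for each $n$, a $(t,\varepsilon)$-net $\{x_i^n\}_{i=1}^N$ in $X_n$ such that for all $n,m$, all $s>t$ and all $i,j\in\{1,\dots,N\}$: if $M_n(x_i^n,x_j^n,s)<M_m(x_i^m,x_j^m,s)$ then $\dfrac{M_n(x_i^n,x_j^n,s)}{M_m(x_i^m,x_j^m,s)}\ge\dfrac{M_n(x_i^n,x_j^n,t)}{M_m(x_i^m,x_j^m,t)}$. Then for every $t>0$ and $0<\varepsilon<1$ there is a subsequence $\{X_{n_k}\}_k$ with $M_{GH}(X_{n_j},X_{n_k},t)>(1-\varepsilon)^2$ for all $j,k$; and consequently $\{(X_n,M_n,\cdot)\}_n$ has a Cauchy subsequence with respect to $M_{GH}$.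
   Context: A fuzzy metric space $(X,M,\cdot)$ with the product $t$-norm: $M:X\times X\times[0,\infty)\to[0,1]$ with, for all $x,y,z$ and $t,s>0$: (KM1) $M(x,y,0)=0$; (KM2) $M(x,y,t)=1$ for all $t>0$ iff $x=y$; (KM3) $M(x,y,t)=M(y,x,t)$; (KM4) $M(x,y,t)\cdot M(y,z,s)\le M(x,z,t+s)$; (KM5) $M(x,y,\cdot)$ left continuous on $[0,\infty)$. Non-Archimedean: $M(x,z,\max\{t,s\})\ge M(x,y,t)\cdot M(y,z,s)$. Balls $B(x,\varepsilon,t)=\{y: M(x,y,t)>1-\varepsilon\}$ generate the topology; "compact" refers to it. $H_M(A,B,t)=\min\{\inf_{a\in A}\sup_{b\in B}M(a,b,t),\ \inf_{b\in B}\sup_{a\in A}M(a,b,t)\}$ for nonempty compact $A,B$. A fuzzy metric on the disjoint union $X\sqcup Y$ is admissible if it restricts to the given ones on $X$ and $Y$; $M_{GH}(X,Y,t)=\sup\{H_M(X,Y,t): M$ admissible non-Archimedean fuzzy metric on $X\sqcup Y$ with the same $t$-norm$\}$. A sequence $(X_n)$ is Cauchy w.r.t. $M_{GH}$ if for every $t>0$, $0<\varepsilon<1$ there is $n_0$ with $M_{GH}(X_n,X_m,t)>1-\varepsilon$ for all $n,m\ge n_0$. A family $\{x_i\}_{i=1}^N$ is a $(t,\varepsilon)$-net in $X$ if each $x\in X$ has some $i$ with $M(x,x_i,t)>1-\varepsilon$. $\mathrm{Cov}(X,\varepsilon,t)$ is the minimal cardinality of $C\subseteq X$ with $X=\bigcup_{c\in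 C}B(c,\varepsilon,t)$. $\mathrm{diam}_s(X)=\inf\{M(x,y,s):x,y\in X\}$. *)

theory Defs
  imports "HOL-Analysis.Analysis"
begin

text \<open>A fuzzy metric (w.r.t. the product t-norm) on the carrier S. The time
  parameter ranges over [0,\<infinity>); values at negative times are irrelevant.\<close>
definition fuzzy_metric :: "'a set \<Rightarrow> ('a \<Rightarrow> 'a \<Rightarrow> real \<Rightarrow> real) \<Rightarrow> bool" where
  "fuzzy_metric S M \<longleftrightarrow>
     (\<forall>x\<in>S. \<forall>y\<in>S. \<forall>t\<ge>0. 0 \<le> M x y t \<and> M x y t \<le> 1) \<and>
     (\<forall>x\<in>S. \<forall>y\<in>S. M x y 0 = 0) \<and>
     (\<forall>x\<in>S. \<forall>y\<in>S. (\<forall>t>0. M x y t = 1) \<longleftrightarrow> x = y) \<and>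
     (\<forall>x\<in>S. \<forall>y\<in>S. \<forall>t\<ge>0. M x y t = M y x t) \<and>
     (\<forall>x\<in>S. \<forall>y\<in>S. \<forall>z\<in>S. \<forall>t>0. \<forall>s>0. M x y t * M y z s \<le> M x z (t + s)) \<and>
     (\<forall>x\<in>S. \<forall>y\<in>S. \<forall>t>0. ((\<lambda>s. M x y s) \<longlongrightarrow> M x y t) (at_left t))"

definition non_archimedean :: "'a set \<Rightarrow> ('a \<Rightarrow> 'a \<Rightarrow> real \<Rightarrow> real) \<Rightarrow> bool" where
  "non_archimedean S M \<longleftrightarrow>
     (\<forall>x\<in>S. \<forall>y\<in>S. \<forall>z\<in>S. \<forall>t>0. \<forall>s>0. M x y t * M y z s \<le> M x z (max t s))"

definition fball :: "'a set \<Rightarrow> ('a \<Rightarrow> 'a \<Rightarrow> real \<Rightarrow> real) \<Rightarrow> 'a \<Rightarrow> real \<Rightarrow> real \<Rightarrow> 'a set" where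
  "fball S M x \<epsilon> t = {y \<in> S. M x y t > 1 - \<epsilon>}"

definition fopen :: "'a set \<Rightarrow> ('a \<Rightarrow> 'a \<Rightarrow> real \<Rightarrow> real) \<Rightarrow> 'a set \<Rightarrow> bool" where
  "fopen S M U \<longleftrightarrow> U \<subseteq> S \<and>
     (\<forall>x\<in>U. \<exists>\<epsilon> t. 0 < \<epsilon> \<and> \<epsilon> < 1 \<and> 0 < t \<and> fball S M x \<epsilon> t \<subseteq> U)"

definition fcompact :: "'a set \<Rightarrow> ('a \<Rightarrow> 'a \<Rightarrow> real \<Rightarrow> real) \<Rightarrow> bool" where
  "fcompact S M \<longleftrightarrow>
     (\<forall>\<U>. (\<forall>U\<in>\<U>. fopen S M U) \<and> S \<subseteq> \<Union>\<U> \<longrightarrow>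
        (\<exists>\<F>\<subseteq>\<U>. finite \<F> \<and> S \<subseteq> \<Union>\<F>))"

definition fdiam :: "'a set \<Rightarrow> ('a \<Rightarrow> 'a \<Rightarrow> real \<Rightarrow> real) \<Rightarrow> real \<Rightarrow> real" where
  "fdiam S M s = Inf {M x y s | x y. x \<in> S \<and> y \<in> S}"

definition fcov :: "'a set \<Rightarrow> ('a \<Rightarrow> 'a \<Rightarrow> real \<Rightarrow> real) \<Rightarrow> real \<Rightarrow> real \<Rightarrow> nat" where
  "fcov S M \<epsilon> t = (LEAST k. \<exists>C. C \<subseteq> S \<and> finite C \<and> card C = k \<and>
                               S = (\<Union>c\<in>C. fball S M c \<epsilon> t))"

definition HM :: "('b \<Rightarrow> 'b \<Rightarrow> real \<Rightarrow> real) \<Rightarrow> 'b set \<Rightarrow> 'b set \<Rightarrow> real \<Rightarrow> real" where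
  "HM M A B t = min (Inf ((\<lambda>a. Sup ((\<lambda>b. M a b t) ` B)) ` A))
                    (Inf ((\<lambda>b. Sup ((\<lambda>a. M a b t) ` A)) ` B))"

definition admissible ::
  "'a set \<Rightarrow> ('a \<Rightarrow> 'a \<Rightarrow> real \<Rightarrow> real) \<Rightarrow> 'b set \<Rightarrow> ('b \<Rightarrow> 'b \<Rightarrow> real \<Rightarrow> real)
   \<Rightarrow> ('a + 'b \<Rightarrow> 'a + 'b \<Rightarrow> real \<Rightarrow> real) \<Rightarrow> bool" where
  "admissible X MX Y MY M \<longleftrightarrow>
     fuzzy_metric (Inl ` X \<union> Inr ` Y) M \<and> non_archimedean (Inl ` X \<union> Inr ` Y) M \<and>
     (\<forall>x\<in>X. \<forall>y\<in>X. \<forall>t\<ge>0. M (Inl x) (Inl y) t = MX x y t) \<and>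
     (\<forall>x\<in>Y. \<forall>y\<in>Y. \<forall>t\<ge>0. M (Inr x) (Inr y) t = MY x y t)"

definition MGH ::
  "'a set \<Rightarrow> ('a \<Rightarrow> 'a \<Rightarrow> real \<Rightarrow> real) \<Rightarrow> 'b set \<Rightarrow> ('b \<Rightarrow> 'b \<Rightarrow> real \<Rightarrow> real) \<Rightarrow> real \<Rightarrow> real" where
  "MGH X MX Y MY t = Sup {HM M (Inl ` X) (Inr ` Y) t | M. admissible X MX Y MY M}"

definition GH_Cauchy :: "(nat \<Rightarrow> 'a set) \<Rightarrow> (nat \<Rightarrow> 'a \<Rightarrow> 'a \<Rightarrow> real \<Rightarrow> real) \<Rightarrow> bool" where
  "GH_Cauchy X M \<longleftrightarrow> (\<forall>t>0. \<forall>\<epsilon>. 0 < \<epsilon> \<and> \<epsilon> < 1 \<longrightarrow>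
     (\<exists>n0. \<forall>n\<ge>n0. \<forall>m\<ge>n0. MGH (X n) (M n) (X m) (M m) t > 1 - \<epsilon>))"

definition is_net :: "'a set \<Rightarrow> ('a \<Rightarrow> 'a \<Rightarrow> real \<Rightarrow> real) \<Rightarrow> (nat \<Rightarrow> 'a) \<Rightarrow> nat \<Rightarrow> real \<Rightarrow> real \<Rightarrow> bool" where
  "is_net S M x N t \<epsilon> \<longleftrightarrow> (\<forall>i\<in>{1..N}. x i \<in> S) \<and>
     (\<forall>y\<in>S. \<exists>i\<in>{1..N}. M y (x i) t > 1 - \<epsilon>)"

end

theory Submission
  imports Defs
begin



lemma fmD:
  assumes "fuzzy_metric S M"
  shows fmD1: "\<forall>x\<in>S. \<forall>y\<in>S. \<forall>t\<ge>0. 0 \<le> M x y t \<and> M x y t \<le> 1"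
    and fmD2: "\<forall>x\<in>S. \<forall>y\<in>S. M x y 0 = 0"
    and fmD3: "\<forall>x\<in>S. \<forall>y\<in>S. (\<forall>t>0. M x y t = 1) \<longleftrightarrow> x = y"
    and fmD4: "\<forall>x\<in>S. \<forall>y\<in>S. \<forall>t\<ge>0. M x y t = M y x t"
    and fmD5: "\<forall>x\<in>S. \<forall>y\<in>S. \<forall>z\<in>S. \<forall>t>0. \<forall>s>0. M x y t * M y z s \<le> M x z (t + s)"
    and fmD6: "\<forall>x\<in>S. \<forall>y\<in>S. \<forall>t>0. ((\<lambda>s. M x y s) \<longlongrightarrow> M x y t) (at_left t)"
  using assms unfolding fuzzy_metric_def
  apply -
  apply (elim conjE, assumption)+
  done

lemma fm_bounds: "fuzzy_metric S M \<Longrightarrow> x \<in> S \<Longrightarrow> y \<in> S \<Longrightarrow> t \<ge> 0 \<Longrightarrow> 0 \<le> M x y t \<and> M x y t \<le> 1"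
  using fmD1 by blast
lemma fm_zero: "fuzzy_metric S M \<Longrightarrow> x \<in> S \<Longrightarrow> y \<in> S \<Longrightarrow> M x y 0 = 0"
  using fmD2 by blast
lemma fm_id: assumes "fuzzy_metric S M" "x \<in> S" "y \<in> S" shows "(\<forall>t>0. M x y t = 1) \<longleftrightarrow> x = y"
  using bspec[OF bspec[OF fmD3[OF assms(1)] assms(2)] assms(3)] .
lemma fm_refl: assumes "fuzzy_metric S M" "x \<in> S" "t > 0" shows "M x x t = 1"
  using fm_id[OF assms(1,2,2)] assms(3) by simp
lemma fm_sym: "fuzzy_metric S M \<Longrightarrow> x \<in> S \<Longrightarrow> y \<in> S \<Longrightarrow> t \<ge> 0 \<Longrightarrow> M x y t = M y x t"
  using fmD4 by blast
lemma fm_lc: "fuzzy_metric S M \<Longrightarrow> x \<in> S \<Longrightarrow> y \<in> S \<Longrightarrow> t > 0 \<Longrightarrow> ((\<lambda>s. M x y s) \<longlongrightarrow> M x y t) (at_left t)"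
  using fmD6 by blast
lemma na_le: "non_archimedean S M \<Longrightarrow> x \<in> S \<Longrightarrow> y \<in> S \<Longrightarrow> z \<in> S \<Longrightarrow> t > 0 \<Longrightarrow> s > 0
   \<Longrightarrow> M x y t * M y z s \<le> M x z (max t s)"
  unfolding non_archimedean_def by blast

lemma na_mono:
  assumes "fuzzy_metric S M" "non_archimedean S M" "x \<in> S" "y \<in> S" "0 \<le> t" "t \<le> t'"
  shows "M x y t \<le> M x y t'"
proof (cases "t = 0")
  case True
  have "M x y 0 = 0" by (rule fm_zero[OF assms(1,3,4)])
  moreover have "0 \<le> M x y t'" using fm_bounds[OF assms(1,3,4)] assms(5,6) by auto
  ultimately show ?thesis using True by simp
next
  case False
  then have "t > 0" "t' > 0" using assms by auto
  have "M x y t * M y y t' \<le> M x y (max t t')"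
    using na_le[OF assms(2,3,4,4) \<open>t>0\<close> \<open>t'>0\<close>] .
  then show ?thesis using fm_refl[OF assms(1,4) \<open>t'>0\<close>] assms(6) by (simp add: max_def)
qed

lemma tendsto_Max_finite:
  fixes f :: "'i \<Rightarrow> 'x \<Rightarrow> real"
  assumes "finite I" "I \<noteq> {}" "\<And>i. i \<in> I \<Longrightarrow> (f i \<longlongrightarrow> l i) F"
  shows "((\<lambda>x. Max ((\<lambda>i. f i x) ` I)) \<longlongrightarrow> Max (l ` I)) F"
  using assms
proof (induction I rule: finite_ne_induct)
  case (singleton i)
  then show ?case by simp
next
  case (insert i I)
  have "((\<lambda>x. max (f i x) (Max ((\<lambda>i. f i x) ` I))) \<longlongrightarrow> max (l i) (Max (l ` I))) F"
    by (intro tendsto_max) (use insert in auto)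
  then show ?case using insert by simp
qed




locale two_spaces =
  fixes X :: "'a set" and MX :: "'a \<Rightarrow> 'a \<Rightarrow> real \<Rightarrow> real"
    and Y :: "'b set" and MY :: "'b \<Rightarrow> 'b \<Rightarrow> real \<Rightarrow> real"
    and a :: "nat \<Rightarrow> 'a" and b :: "nat \<Rightarrow> 'b" and N :: nat and K :: "real \<Rightarrow> real"
  assumes fmX: "fuzzy_metric X MX" and naX: "non_archimedean X MX"
    and fmY: "fuzzy_metric Y MY" and naY: "non_archimedean Y MY"
    and N1: "N \<ge> 1"
    and aX: "\<And>i. i \<in> {1..N} \<Longrightarrow> a i \<in> X"
    and bY: "\<And>i. i \<in> {1..N} \<Longrightarrow> b i \<in> Y"
    and K01: "\<And>s. 0 \<le> K s \<and> K s \<le> 1"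
    and Kmono: "\<And>s u. 0 < s \<Longrightarrow> s \<le> u \<Longrightarrow> K s \<le> K u"
    and Klc: "\<And>s. s > 0 \<Longrightarrow> (K \<longlongrightarrow> K s) (at_left s)"
    and Klt: "\<exists>s>0. K s < 1"
    and KXY: "\<And>t s i j. t > 0 \<Longrightarrow> s > 0 \<Longrightarrow> i \<in> {1..N} \<Longrightarrow> j \<in> {1..N} \<Longrightarrow>
               K t * K s * MY (b i) (b j) (max t s) \<le> MX (a i) (a j) (max t s)"
    and KYX: "\<And>t s i j. t > 0 \<Longrightarrow> s > 0 \<Longrightarrow> i \<in> {1..N} \<Longrightarrow> j \<in> {1..N} \<Longrightarrow>
               K t * K s * MX (a i) (a j) (max t s) \<le> MY (b i) (b j) (max t s)"
begin

definition F :: "'a \<Rightarrow> 'b \<Rightarrow> real \<Rightarrow> real" where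
  "F x y t = Max ((\<lambda>i. MX x (a i) t * K t * MY (b i) y t) ` {1..N})"

definition JM :: "'a + 'b \<Rightarrow> 'a + 'b \<Rightarrow> real \<Rightarrow> real" where
  "JM p q t = (case p of Inl x \<Rightarrow> (case q of Inl x' \<Rightarrow> MX x x' t | Inr y \<Rightarrow> F x y t)
                        | Inr y \<Rightarrow> (case q of Inl x \<Rightarrow> F x y t | Inr y' \<Rightarrow> MY y y' t))"

lemma JM_simps[simp]: "JM (Inl x) (Inl x') t = MX x x' t" "JM (Inl x) (Inr y) t = F x y t"
  "JM (Inr y) (Inl x) t = F x y t" "JM (Inr y) (Inr y') t = MY y y' t"
  by (simp_all add: JM_def)

lemma fin: "finite {1..N}" "{1..N} \<noteq> {}" using N1 by auto

lemma F_ge: "i \<in> {1..N} \<Longrightarrow> MX x (a i) t * K t * MY (b i) y t \<le> F x y t"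
  unfolding F_def using fin by (intro Max_ge) auto

lemma F_obt: "\<exists>i\<in>{1..N}. F x y t = MX x (a i) t * K t * MY (b i) y t"
proof -
  have "F x y t \<in> (\<lambda>i. MX x (a i) t * K t * MY (b i) y t) ` {1..N}"
    unfolding F_def using fin by (intro Max_in) auto
  then show ?thesis by auto
qed

lemma F_bounds:
  assumes "x \<in> X" "y \<in> Y" "t \<ge> 0"
  shows "0 \<le> F x y t" "F x y t \<le> K t" "F x y t \<le> 1"
proof -
  obtain i where i: "i \<in> {1..N}" "F x y t = MX x (a i) t * K t * MY (b i) y t" using F_obt by blast
  have b1: "0 \<le> MX x (a i) t" "MX x (a i) t \<le> 1" using fm_bounds[OF fmX assms(1) aX[OF i(1)] assms(3)] by auto
  have b2: "0 \<le> MY (b i) y t" "MY (b i) y t \<le> 1" using fm_bounds[OF fmY bY[OF i(1)] assms(2) assms(3)] by auto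
  have k: "0 \<le> K t" "K t \<le> 1" using K01 by auto
  show "0 \<le> F x y t" using i b1 b2 k by simp
  have "MX x (a i) t * K t * MY (b i) y t \<le> 1 * K t * 1"
    using b1 b2 k by (intro mult_mono) auto
  then show "F x y t \<le> K t" using i by simp
  then show "F x y t \<le> 1" using k by simp
qed

lemma F_zero: "x \<in> X \<Longrightarrow> y \<in> Y \<Longrightarrow> F x y 0 = 0"
proof -
  assume xy: "x \<in> X" "y \<in> Y"
  obtain i where i: "i \<in> {1..N}" "F x y 0 = MX x (a i) 0 * K 0 * MY (b i) y 0" using F_obt by blast
  have "MX x (a i) 0 = 0" using fm_zero[OF fmX xy(1) aX[OF i(1)]] .
  then show ?thesis using i by simp
qed

lemma F_lc: "x \<in> X \<Longrightarrow> y \<in> Y \<Longrightarrow> t > 0 \<Longrightarrow> ((\<lambda>s. F x y s) \<longlongrightarrow> F x y t) (at_left t)"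
  unfolding F_def
proof (rule tendsto_Max_finite[OF fin])
  fix i assume i: "i \<in> {1..N}" and xy: "x \<in> X" "y \<in> Y" "t > 0"
  show "((\<lambda>s. MX x (a i) s * K s * MY (b i) y s) \<longlongrightarrow> MX x (a i) t * K t * MY (b i) y t) (at_left t)"
    by (intro tendsto_mult fm_lc[OF fmX xy(1) aX[OF i]] fm_lc[OF fmY bY[OF i] xy(2)] Klc xy(3) xy(3) xy(3))
qed

lemma monoX: "x \<in> X \<Longrightarrow> x' \<in> X \<Longrightarrow> 0 \<le> t \<Longrightarrow> t \<le> u \<Longrightarrow> MX x x' t \<le> MX x x' u"
  by (rule na_mono[OF fmX naX])
lemma monoY: "y \<in> Y \<Longrightarrow> y' \<in> Y \<Longrightarrow> 0 \<le> t \<Longrightarrow> t \<le> u \<Longrightarrow> MY y y' t \<le> MY y y' u"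
  by (rule na_mono[OF fmY naY])

lemma F_A:
  assumes "x \<in> X" "x' \<in> X" "y \<in> Y" "t > 0" "s > 0"
  shows "MX x x' t * F x' y s \<le> F x y (max t s)"
proof -
  let ?u = "max t s"
  obtain i where i: "i \<in> {1..N}" "F x' y s = MX x' (a i) s * K s * MY (b i) y s" using F_obt by blast
  note ai = aX[OF i(1)] and bi = bY[OF i(1)]
  have "MX x x' t * F x' y s = (MX x x' t * MX x' (a i) s) * (K s * MY (b i) y s)"
    using i by (simp add: mult_ac)
  also have "\<dots> \<le> MX x (a i) ?u * (K ?u * MY (b i) y ?u)"
  proof (rule mult_mono)
    show "MX x x' t * MX x' (a i) s \<le> MX x (a i) ?u" by (rule na_le[OF naX assms(1,2) ai assms(4,5)])
    show "K s * MY (b i) y s \<le> K ?u * MY (b i) y ?u"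
      apply (rule mult_mono)
      using Kmono[OF assms(5)] monoY[OF bi assms(3)] assms K01 fm_bounds[OF fmY bi assms(3)] by auto
    show "0 \<le> MX x (a i) ?u" using fm_bounds[OF fmX assms(1) ai] assms by auto
    show "0 \<le> K s * MY (b i) y s" using K01 fm_bounds[OF fmY bi assms(3)] assms by auto
  qed
  also have "\<dots> \<le> F x y ?u" using F_ge[OF i(1), of x ?u y] by (simp add: mult_ac)
  finally show ?thesis .
qed

lemma F_B:
  assumes "x \<in> X" "y \<in> Y" "y' \<in> Y" "t > 0" "s > 0"
  shows "F x y t * MY y y' s \<le> F x y' (max t s)"
proof -
  let ?u = "max t s"
  obtain i where i: "i \<in> {1..N}" "F x y t = MX x (a i) t * K t * MY (b i) y t" using F_obt by blast
  note ai = aX[OF i(1)] and bi = bY[OF i(1)]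
  have "F x y t * MY y y' s = (MX x (a i) t * K t) * (MY (b i) y t * MY y y' s)"
    using i by (simp add: mult_ac)
  also have "\<dots> \<le> (MX x (a i) ?u * K ?u) * MY (b i) y' ?u"
  proof (rule mult_mono)
    show "MY (b i) y t * MY y y' s \<le> MY (b i) y' ?u" by (rule na_le[OF naY bi assms(2,3) assms(4,5)])
    show "MX x (a i) t * K t \<le> MX x (a i) ?u * K ?u"
      apply (rule mult_mono)
      using Kmono[OF assms(4)] monoX[OF assms(1) ai] assms K01 fm_bounds[OF fmX assms(1) ai] by auto
    show "0 \<le> MX x (a i) ?u * K ?u" using fm_bounds[OF fmX assms(1) ai] assms K01 by auto
    show "0 \<le> MY (b i) y t * MY y y' s" using fm_bounds[OF fmY bi assms(2)] fm_bounds[OF fmY assms(2,3)] assms by auto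
  qed
  also have "\<dots> \<le> F x y' ?u" using F_ge[OF i(1), of x ?u y'] by (simp add: mult_ac)
  finally show ?thesis .
qed


lemma F_C:
  assumes "x \<in> X" "x' \<in> X" "y \<in> Y" "t > 0" "s > 0"
  shows "F x y t * F x' y s \<le> MX x x' (max t s)"
proof -
  let ?u = "max t s"
  have u: "?u > 0" "t \<le> ?u" "s \<le> ?u" using assms by auto
  obtain i where i: "i \<in> {1..N}" "F x y t = MX x (a i) t * K t * MY (b i) y t" using F_obt by blast
  obtain j where j: "j \<in> {1..N}" "F x' y s = MX x' (a j) s * K s * MY (b j) y s" using F_obt by blast
  note ai = aX[OF i(1)] and bi = bY[OF i(1)] and aj = aX[OF j(1)] and bj = bY[OF j(1)]
  have symY: "MY (b j) y s = MY y (b j) s" using fm_sym[OF fmY bj assms(3)] assms by auto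
  have symX: "MX x' (a j) s = MX (a j) x' s" using fm_sym[OF fmX assms(2) aj] assms by auto
  have nn: "0 \<le> MX x (a i) t" "0 \<le> MX (a j) x' s" "0 \<le> K t" "0 \<le> K s"
     "0 \<le> MY (b i) y t" "0 \<le> MY y (b j) s"
    using fm_bounds[OF fmX assms(1) ai] fm_bounds[OF fmX aj assms(2)] K01
      fm_bounds[OF fmY bi assms(3)] fm_bounds[OF fmY assms(3) bj] assms by auto
  have "F x y t * F x' y s = MX x (a i) t * (K t * K s * (MY (b i) y t * MY y (b j) s)) * MX (a j) x' s"
    using i j symX symY by (simp add: mult_ac)
  also have "\<dots> \<le> MX x (a i) t * (K t * K s * MY (b i) (b j) ?u) * MX (a j) x' s"
    apply (intro mult_right_mono mult_left_mono na_le[OF naY bi assms(3) bj assms(4,5)])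
    using nn by auto
  also have "\<dots> \<le> MX x (a i) t * MX (a i) (a j) ?u * MX (a j) x' s"
    apply (intro mult_right_mono mult_left_mono KXY assms(4,5) i(1) j(1))
    using nn by auto
  also have "\<dots> \<le> MX x (a j) ?u * MX (a j) x' s"
  proof (intro mult_right_mono)
    show "MX x (a i) t * MX (a i) (a j) ?u \<le> MX x (a j) ?u"
      using na_le[OF naX assms(1) ai aj assms(4) u(1)] u by (simp add: max_def)
  qed (use nn in auto)
  also have "\<dots> \<le> MX x x' ?u"
    using na_le[OF naX assms(1) aj assms(2) u(1) assms(5)] u by (simp add: max_def)
  finally show ?thesis .
qed

lemma F_D:
  assumes "x \<in> X" "y \<in> Y" "y' \<in> Y" "t > 0" "s > 0"
  shows "F x y t * F x y' s \<le> MY y y' (max t s)"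
proof -
  let ?u = "max t s"
  have u: "?u > 0" "t \<le> ?u" "s \<le> ?u" using assms by auto
  obtain i where i: "i \<in> {1..N}" "F x y t = MX x (a i) t * K t * MY (b i) y t" using F_obt by blast
  obtain j where j: "j \<in> {1..N}" "F x y' s = MX x (a j) s * K s * MY (b j) y' s" using F_obt by blast
  note ai = aX[OF i(1)] and bi = bY[OF i(1)] and aj = aX[OF j(1)] and bj = bY[OF j(1)]
  have symY: "MY (b i) y t = MY y (b i) t" using fm_sym[OF fmY bi assms(2)] assms by auto
  have symX: "MX x (a i) t = MX (a i) x t" using fm_sym[OF fmX assms(1) ai] assms by auto
  have nn: "0 \<le> MX (a i) x t" "0 \<le> MX x (a j) s" "0 \<le> K t" "0 \<le> K s"
     "0 \<le> MY y (b i) t" "0 \<le> MY (b j) y' s"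
    using fm_bounds[OF fmX ai assms(1)] fm_bounds[OF fmX assms(1) aj] K01
      fm_bounds[OF fmY assms(2) bi] fm_bounds[OF fmY bj assms(3)] assms by auto
  have "F x y t * F x y' s = MY y (b i) t * (K t * K s * (MX (a i) x t * MX x (a j) s)) * MY (b j) y' s"
    using i j symX symY by (simp add: mult_ac)
  also have "\<dots> \<le> MY y (b i) t * (K t * K s * MX (a i) (a j) ?u) * MY (b j) y' s"
    apply (intro mult_right_mono mult_left_mono na_le[OF naX ai assms(1) aj assms(4,5)])
    using nn by auto
  also have "\<dots> \<le> MY y (b i) t * MY (b i) (b j) ?u * MY (b j) y' s"
    apply (intro mult_right_mono mult_left_mono KYX assms(4,5) i(1) j(1))
    using nn by auto
  also have "\<dots> \<le> MY y (b j) ?u * MY (b j) y' s"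
  proof (intro mult_right_mono)
    show "MY y (b i) t * MY (b i) (b j) ?u \<le> MY y (b j) ?u"
      using na_le[OF naY assms(2) bi bj assms(4) u(1)] u by (simp add: max_def)
  qed (use nn in auto)
  also have "\<dots> \<le> MY y y' ?u"
    using na_le[OF naY assms(2) bj assms(3) u(1) assms(5)] u by (simp add: max_def)
  finally show ?thesis .
qed


lemma U_cases:
  assumes "p \<in> Inl ` X \<union> Inr ` Y"
  obtains x where "x \<in> X" "p = Inl x" | y where "y \<in> Y" "p = Inr y"
  using assms by auto

lemma JM_na:
  assumes "p \<in> Inl ` X \<union> Inr ` Y" "q \<in> Inl ` X \<union> Inr ` Y" "r \<in> Inl ` X \<union> Inr ` Y"
    and ts: "t > 0" "s > 0"
  shows "JM p q t * JM q r s \<le> JM p r (max t s)"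
proof -
  have mc: "max s t = max t s" by (simp add: max_def)
  show ?thesis
  proof (cases rule: U_cases[OF assms(1)])
    case (1 x)
    then show ?thesis
    proof (cases rule: U_cases[OF assms(2)])
      case (1 x')
      then show ?thesis
      proof (cases rule: U_cases[OF assms(3)])
        case (1 x'')
        then show ?thesis using \<open>p = Inl x\<close> \<open>x \<in> X\<close> \<open>q = Inl x'\<close> \<open>x' \<in> X\<close> na_le[OF naX _ _ _ ts] by simp
      next
        case (2 y)
        then show ?thesis using \<open>p = Inl x\<close> \<open>x \<in> X\<close> \<open>q = Inl x'\<close> \<open>x' \<in> X\<close> F_A[OF _ _ _ ts] by simp
      qed
    next
      case (2 y)
      then show ?thesis
      proof (cases rule: U_cases[OF assms(3)])
        case (1 x'')
        then show ?thesis using \<open>p = Inl x\<close> \<open>x \<in> X\<close> \<open>q = Inr y\<close> \<open>y \<in> Y\<close> F_C[OF _ _ _ ts] by simp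
      next
        case (2 y')
        then show ?thesis using \<open>p = Inl x\<close> \<open>x \<in> X\<close> \<open>q = Inr y\<close> \<open>y \<in> Y\<close> F_B[OF _ _ _ ts] by simp
      qed
    qed
  next
    case (2 y)
    then show ?thesis
    proof (cases rule: U_cases[OF assms(2)])
      case (1 x)
      then show ?thesis
      proof (cases rule: U_cases[OF assms(3)])
        case (1 x')
        have "MX x' x s * F x y t \<le> F x' y (max s t)" using F_A[OF 1(1) \<open>x \<in> X\<close> \<open>y \<in> Y\<close> ts(2,1)] .
        moreover have "MX x' x s = MX x x' s" using fm_sym[OF fmX 1(1) \<open>x \<in> X\<close>] ts by simp
        ultimately show ?thesis using 1 \<open>p = Inr y\<close> \<open>q = Inl x\<close> mc by (simp add: mult.commute)
      next
        case (2 y')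
        then show ?thesis using \<open>p = Inr y\<close> \<open>y \<in> Y\<close> \<open>q = Inl x\<close> \<open>x \<in> X\<close> F_D[OF _ _ _ ts] by simp
      qed
    next
      case (2 y')
      then show ?thesis
      proof (cases rule: U_cases[OF assms(3)])
        case (1 x)
        have "F x y' s * MY y' y t \<le> F x y (max s t)" using F_B[OF 1(1) \<open>y' \<in> Y\<close> \<open>y \<in> Y\<close> ts(2,1)] .
        moreover have "MY y' y t = MY y y' t" using fm_sym[OF fmY \<open>y' \<in> Y\<close> \<open>y \<in> Y\<close>] ts by simp
        ultimately show ?thesis using 1 \<open>p = Inr y\<close> \<open>q = Inr y'\<close> mc by (simp add: mult.commute)
      next
        case (2 y'')
        then show ?thesis using \<open>p = Inr y\<close> \<open>y \<in> Y\<close> \<open>q = Inr y'\<close> \<open>y' \<in> Y\<close> na_le[OF naY _ _ _ ts] by simp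
      qed
    qed
  qed
qed

lemma JM_refl: "p \<in> Inl ` X \<union> Inr ` Y \<Longrightarrow> t > 0 \<Longrightarrow> JM p p t = 1"
  by (auto intro: fm_refl[OF fmX] fm_refl[OF fmY])

lemma JM_admissible: "admissible X MX Y MY JM"
proof -
  let ?U = "Inl ` X \<union> Inr ` Y"
  have bounds: "\<forall>p\<in>?U. \<forall>q\<in>?U. \<forall>t\<ge>0. 0 \<le> JM p q t \<and> JM p q t \<le> 1"
    using fm_bounds[OF fmX] fm_bounds[OF fmY] F_bounds by fastforce
  have zero: "\<forall>p\<in>?U. \<forall>q\<in>?U. JM p q 0 = 0"
    using fm_zero[OF fmX] fm_zero[OF fmY] F_zero by fastforce
  obtain s0 where s0: "s0 > 0" "K s0 < 1" using Klt by blast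
  have Fne: "x \<in> X \<Longrightarrow> y \<in> Y \<Longrightarrow> \<not> (\<forall>t>0. F x y t = 1)" for x y
    using F_bounds(2)[of x y s0] s0 by force
  have idX: "\<And>x y. x \<in> X \<Longrightarrow> y \<in> X \<Longrightarrow> (\<forall>t>0. MX x y t = 1) \<longleftrightarrow> x = y"
    using fm_id[OF fmX] by blast
  have idY: "\<And>x y. x \<in> Y \<Longrightarrow> y \<in> Y \<Longrightarrow> (\<forall>t>0. MY x y t = 1) \<longleftrightarrow> x = y"
    using fm_id[OF fmY] by blast
  have ident: "\<forall>p\<in>?U. \<forall>q\<in>?U. (\<forall>t>0. JM p q t = 1) \<longleftrightarrow> p = q"
  proof (intro ballI)
    fix p q assume p: "p \<in> ?U" and q: "q \<in> ?U"
    show "(\<forall>t>0. JM p q t = 1) \<longleftrightarrow> p = q"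
      apply (cases rule: U_cases[OF p]; cases rule: U_cases[OF q])
      using idX idY Fne by auto
  qed
  have sym: "\<forall>p\<in>?U. \<forall>q\<in>?U. \<forall>t\<ge>0. JM p q t = JM q p t"
    using fm_sym[OF fmX] fm_sym[OF fmY] by fastforce
  have tri: "\<forall>p\<in>?U. \<forall>q\<in>?U. \<forall>r\<in>?U. \<forall>t>0. \<forall>s>0. JM p q t * JM q r s \<le> JM p r (t + s)"
  proof (intro ballI allI impI)
    fix p q r t s assume p: "p \<in> ?U" and q: "q \<in> ?U" and r: "r \<in> ?U" and t: "(t::real) > 0" and s: "(s::real) > 0"
    have "JM p q t * JM q r s \<le> JM p r (max t s)" by (rule JM_na[OF p q r t s])
    also have "\<dots> = JM p r (max t s) * JM r r (t + s)" using JM_refl[OF r, of "t+s"] t s by simp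
    also have "\<dots> \<le> JM p r (max (max t s) (t + s))" by (rule JM_na[OF p r r]) (use t s in auto)
    also have "max (max t s) (t + s) = t + s" using t s by simp
    finally show "JM p q t * JM q r s \<le> JM p r (t + s)" .
  qed
  have lc: "\<forall>p\<in>?U. \<forall>q\<in>?U. \<forall>t>0. ((\<lambda>s. JM p q s) \<longlongrightarrow> JM p q t) (at_left t)"
    using fm_lc[OF fmX] fm_lc[OF fmY] F_lc by fastforce
  have na: "non_archimedean ?U JM"
    unfolding non_archimedean_def using JM_na by blast
  show ?thesis
    unfolding admissible_def fuzzy_metric_def
    using bounds zero ident sym tri lc na by simp
qed


end



lemma HM_le1:
  assumes fm: "fuzzy_metric (Inl ` X \<union> Inr ` Y) M'" and ne: "X \<noteq> {}" "Y \<noteq> {}" and s: "s \<ge> 0"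
  shows "HM M' (Inl ` X) (Inr ` Y) s \<le> 1"
proof -
  let ?g = "\<lambda>a. Sup ((\<lambda>b. M' a b s) ` Inr ` Y)"
  obtain x0 where x0: "x0 \<in> X" using ne by blast
  obtain y0 where y0: "y0 \<in> Y" using ne by blast
  have g1: "?g a \<le> 1" if "a \<in> Inl ` X" for a
    by (rule cSup_least) (use ne that fm_bounds[OF fm _ _ s, of a] in auto)
  have g0: "0 \<le> ?g a" if "a \<in> Inl ` X" for a
  proof -
    have "0 \<le> M' a (Inr y0) s" using fm_bounds[OF fm _ _ s, of a "Inr y0"] that y0 by auto
    also have "\<dots> \<le> ?g a"
      by (rule cSup_upper) (use y0 fm_bounds[OF fm _ _ s, of a] that in \<open>auto intro!: bdd_aboveI[of _ 1]\<close>)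
    finally show ?thesis .
  qed
  have "Inf (?g ` Inl ` X) \<le> ?g (Inl x0)"
    by (rule cInf_lower) (use x0 g0 in \<open>auto intro!: bdd_belowI[of _ 0]\<close>)
  also have "\<dots> \<le> 1" using g1 x0 by auto
  finally show ?thesis unfolding HM_def by linarith
qed

lemma MGH_ge:
  assumes adm: "admissible X MX Y MY M'" and ne: "X \<noteq> {}" "Y \<noteq> {}" and s: "s \<ge> 0"
  shows "HM M' (Inl ` X) (Inr ` Y) s \<le> MGH X MX Y MY s"
  unfolding MGH_def
proof (rule cSup_upper)
  show "HM M' (Inl ` X) (Inr ` Y) s \<in> {HM M (Inl ` X) (Inr ` Y) s |M. admissible X MX Y MY M}"
    using adm by blast
  show "bdd_above {HM M (Inl ` X) (Inr ` Y) s |M. admissible X MX Y MY M}"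
    by (rule bdd_aboveI[of _ 1]) (use HM_le1 ne s in \<open>auto simp: admissible_def\<close>)
qed

lemma HM_ge:
  assumes fm: "fuzzy_metric (Inl ` X \<union> Inr ` Y) M'" and ne: "X \<noteq> {}" "Y \<noteq> {}" and s: "s \<ge> 0"
    and h1: "\<forall>x\<in>X. \<exists>y\<in>Y. c \<le> M' (Inl x) (Inr y) s"
    and h2: "\<forall>y\<in>Y. \<exists>x\<in>X. c \<le> M' (Inl x) (Inr y) s"
  shows "c \<le> HM M' (Inl ` X) (Inr ` Y) s"
proof -
  have p1: "c \<le> Inf ((\<lambda>a. Sup ((\<lambda>b. M' a b s) ` Inr ` Y)) ` Inl ` X)"
  proof (rule cInf_greatest)
    show "(\<lambda>a. Sup ((\<lambda>b. M' a b s) ` Inr ` Y)) ` Inl ` X \<noteq> {}" using ne by auto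
    fix v assume "v \<in> (\<lambda>a. Sup ((\<lambda>b. M' a b s) ` Inr ` Y)) ` Inl ` X"
    then obtain x where x: "x \<in> X" "v = Sup ((\<lambda>b. M' (Inl x) b s) ` Inr ` Y)" by auto
    obtain y where y: "y \<in> Y" "c \<le> M' (Inl x) (Inr y) s" using h1 x by blast
    have "M' (Inl x) (Inr y) s \<le> Sup ((\<lambda>b. M' (Inl x) b s) ` Inr ` Y)"
      by (rule cSup_upper) (use y x fm_bounds[OF fm _ _ s, of "Inl x"] in \<open>auto intro!: bdd_aboveI[of _ 1]\<close>)
    then show "c \<le> v" using x y by linarith
  qed
  have p2: "c \<le> Inf ((\<lambda>b. Sup ((\<lambda>a. M' a b s) ` Inl ` X)) ` Inr ` Y)"
  proof (rule cInf_greatest)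
    show "(\<lambda>b. Sup ((\<lambda>a. M' a b s) ` Inl ` X)) ` Inr ` Y \<noteq> {}" using ne by auto
    fix v assume "v \<in> (\<lambda>b. Sup ((\<lambda>a. M' a b s) ` Inl ` X)) ` Inr ` Y"
    then obtain y where y: "y \<in> Y" "v = Sup ((\<lambda>a. M' a (Inr y) s) ` Inl ` X)" by auto
    obtain x where x: "x \<in> X" "c \<le> M' (Inl x) (Inr y) s" using h2 y by blast
    have "M' (Inl x) (Inr y) s \<le> Sup ((\<lambda>a. M' a (Inr y) s) ` Inl ` X)"
      by (rule cSup_upper) (use y x fm_bounds[OF fm _ _ s, of _ "Inr y"] in \<open>auto intro!: bdd_aboveI[of _ 1]\<close>)
    then show "c \<le> v" using x y by linarith
  qed
  show ?thesis unfolding HM_def using p1 p2 by simp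
qed





lemma fdiam_le:
  assumes "fuzzy_metric S M" "p \<in> S" "q \<in> S" "u \<ge> 0"
  shows "fdiam S M u \<le> M p q u"
  unfolding fdiam_def
  by (rule cInf_lower) (use assms fm_bounds[OF assms(1) _ _ assms(4)] in \<open>auto intro!: bdd_belowI[of _ 0]\<close>)

lemma key:
  fixes X :: "nat \<Rightarrow> 'a set" and M :: "nat \<Rightarrow> 'a \<Rightarrow> 'a \<Rightarrow> real \<Rightarrow> real"
    and C :: "real \<Rightarrow> real" and x :: "nat \<Rightarrow> nat \<Rightarrow> 'a"
  assumes spaces: "\<And>n. X n \<noteq> {} \<and> fuzzy_metric (X n) (M n) \<and> non_archimedean (X n) (M n)"
    and Cmono: "\<forall>s t. 0 < s \<longrightarrow> s \<le> t \<longrightarrow> C s \<le> C t"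
    and Clc: "\<forall>s>0. (C \<longlongrightarrow> C s) (at_left s)"
    and C1: "\<forall>s>0. C s \<le> 1"
    and Cd: "\<forall>s>0. \<forall>n. 0 < C s \<and> C s \<le> fdiam (X n) (M n) s"
    and net: "\<forall>n. is_net (X n) (M n) (x n) NN t0 \<epsilon>"
    and ratio: "\<forall>n m s i j. s > t0 \<longrightarrow> i \<in> {1..NN} \<longrightarrow> j \<in> {1..NN} \<longrightarrow>
                   M n (x n i) (x n j) s < M m (x m i) (x m j) s \<longrightarrow>
                   M n (x n i) (x n j) s / M m (x m i) (x m j) s
                     \<ge> M n (x n i) (x n j) t0 / M m (x m i) (x m j) t0"
    and t0: "t0 > 0" "t0 < t" and eps: "\<epsilon> > 0" "\<epsilon> < 1"
    and S: "infinite S"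
  shows "\<exists>S'\<subseteq>S. infinite S' \<and> (\<forall>n\<in>S'. \<forall>m\<in>S'. \<forall>s\<ge>t. MGH (X n) (M n) (X m) (M m) s > (1 - \<epsilon>)^2)"
proof -
  have fm: "\<And>n. fuzzy_metric (X n) (M n)" and na: "\<And>n. non_archimedean (X n) (M n)"
    and ne: "\<And>n. X n \<noteq> {}" using spaces by auto
  have xin: "\<And>n i. i \<in> {1..NN} \<Longrightarrow> x n i \<in> X n" using net unfolding is_net_def by blast
  have netc: "\<And>n y. y \<in> X n \<Longrightarrow> \<exists>i\<in>{1..NN}. M n y (x n i) t0 > 1 - \<epsilon>"
    using net unfolding is_net_def by blast
  have Cpos: "\<And>s. s > 0 \<Longrightarrow> C s > 0" using Cd by blast
  have Cle: "\<And>n p q u. u > 0 \<Longrightarrow> p \<in> X n \<Longrightarrow> q \<in> X n \<Longrightarrow> C u \<le> M n p q u"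
  proof -
    fix n p q and u :: real assume "u > 0" "p \<in> X n" "q \<in> X n"
    then have "C u \<le> fdiam (X n) (M n) u" using Cd by blast
    moreover have "fdiam (X n) (M n) u \<le> M n p q u"
      using fdiam_le[OF fm, of p n q u] \<open>u > 0\<close> \<open>p \<in> X n\<close> \<open>q \<in> X n\<close> by simp
    ultimately show "C u \<le> M n p q u" by linarith
  qed
  define \<kappa> where "\<kappa> = 1 - \<epsilon> / 2"
  have kap: "0 < \<kappa>" "\<kappa> < 1" "1 - \<epsilon> < \<kappa>" using eps by (auto simp: \<kappa>_def)
  define c where "c = C t0"
  have c: "c > 0" "c \<le> 1" using Cpos C1 t0 by (auto simp: c_def)
  define h where "h = (1 - \<kappa>^2) * c"
  have "\<kappa> * \<kappa> < 1 * 1" using kap by (intro mult_strict_mono) auto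
  then have kap2: "\<kappa>^2 < 1" "0 < \<kappa>^2" using kap by (auto simp: power2_eq_square)
  have h: "h > 0" using kap2 c by (simp add: h_def)
  define P where "P n i j = M n (x n i) (x n j) t0" for n i j
  have P01: "\<And>n i j. i \<in> {1..NN} \<Longrightarrow> j \<in> {1..NN} \<Longrightarrow> c \<le> P n i j \<and> P n i j \<le> 1"
  proof -
    fix n i j assume ij: "i \<in> {1..NN}" "j \<in> {1..NN}"
    have "C t0 \<le> M n (x n i) (x n j) t0" by (rule Cle[OF t0(1) xin[OF ij(1)] xin[OF ij(2)]])
    moreover have "M n (x n i) (x n j) t0 \<le> 1" using fm_bounds[OF fm xin[OF ij(1)] xin[OF ij(2)]] t0 by simp
    ultimately show "c \<le> P n i j \<and> P n i j \<le> 1" by (simp add: P_def c_def)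
  qed
  define pairs where "pairs = List.product [1..<NN+1] [1..<NN+1]"
  have set_pairs: "set pairs = {1..NN} \<times> {1..NN}" unfolding pairs_def by auto
  define cls where "cls n = map (\<lambda>(i,j). nat \<lfloor>P n i j / h\<rfloor>) pairs" for n
  define L where "L = nat \<lceil>1 / h\<rceil>"
  have cls_in: "cls n \<in> {xs. set xs \<subseteq> {0..L} \<and> length xs = length pairs}" for n
  proof -
    have "nat \<lfloor>P n i j / h\<rfloor> \<le> L" if "(i,j) \<in> set pairs" for i j
    proof -
      have "P n i j \<le> 1" using P01 that set_pairs by auto
      then have "P n i j / h \<le> 1 / h" using h by (simp add: divide_right_mono)
      then have "\<lfloor>P n i j / h\<rfloor> \<le> \<lceil>1 / h\<rceil>" by linarith
      then show ?thesis unfolding L_def by linarith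
    qed
    then show ?thesis unfolding cls_def by auto
  qed
  have "finite (cls ` S)"
    by (rule finite_subset[OF _ finite_lists_length_eq[of "{0..L}" "length pairs"]]) (use cls_in in auto)
  from pigeonhole_infinite[OF S this] obtain n0 where n0: "n0 \<in> S" "infinite {n \<in> S. cls n = cls n0}"
    by blast
  define S' where "S' = {n \<in> S. cls n = cls n0}"
  have close: "\<kappa>^2 * P m i j \<le> P n i j" if nm: "n \<in> S'" "m \<in> S'" and ij: "i \<in> {1..NN}" "j \<in> {1..NN}" for n m i j
  proof -
    have "cls n = cls m" using nm by (simp add: S'_def)
    then have "nat \<lfloor>P n i j / h\<rfloor> = nat \<lfloor>P m i j / h\<rfloor>"
      unfolding cls_def using ij set_pairs by auto
    moreover have "0 \<le> P n i j / h" "0 \<le> P m i j / h"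
      using P01[OF ij, of n] P01[OF ij, of m] c h by auto
    ultimately have fl: "\<lfloor>P n i j / h\<rfloor> = \<lfloor>P m i j / h\<rfloor>" by (simp add: nat_eq_iff2)
    have "P m i j / h < P n i j / h + 1" using fl by linarith
    then have "P m i j < P n i j + h" using h by (simp add: field_simps)
    moreover have "h \<le> (1 - \<kappa>^2) * P m i j" unfolding h_def using P01[OF ij, of m] kap2
      by (intro mult_left_mono) auto
    ultimately show ?thesis by (simp add: algebra_simps)
  qed
  define K where "K s = (if s \<le> 0 then 0 else if s \<le> t0 then \<kappa> * C s else \<kappa>)" for s
  have K01: "\<And>s. 0 \<le> K s \<and> K s \<le> 1"
  proof -
    fix s :: real
    show "0 \<le> K s \<and> K s \<le> 1"
    proof (cases "s \<le> 0")
      case False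
      then have "0 < C s" "C s \<le> 1" using Cpos C1 by auto
      then have "\<kappa> * C s \<le> 1 * 1" using kap by (intro mult_mono) auto
      then show ?thesis using False kap \<open>0 < C s\<close> by (auto simp: K_def)
    qed (auto simp: K_def)
  qed
  have Kle: "\<And>s. K s \<le> \<kappa>"
  proof -
    fix s :: real
    show "K s \<le> \<kappa>"
    proof (cases "0 < s \<and> s \<le> t0")
      case True
      then have "\<kappa> * C s \<le> \<kappa> * 1" using C1 kap by (intro mult_left_mono) auto
      then show ?thesis using True by (auto simp: K_def)
    qed (use kap in \<open>auto simp: K_def\<close>)
  qed
  have KleC: "\<And>s. 0 < s \<Longrightarrow> s \<le> t0 \<Longrightarrow> K s \<le> C s"
  proof -
    fix s :: real assume "0 < s" "s \<le> t0"
    moreover have "\<kappa> * C s \<le> 1 * C s" using kap Cpos[OF \<open>0 < s\<close>] by (intro mult_right_mono) auto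
    ultimately show "K s \<le> C s" by (auto simp: K_def)
  qed
  have Kmono: "\<And>s u. 0 < s \<Longrightarrow> s \<le> u \<Longrightarrow> K s \<le> K u"
  proof -
    fix s u :: real assume su: "0 < s" "s \<le> u"
    show "K s \<le> K u"
    proof (cases "u \<le> t0")
      case True
      then have "\<kappa> * C s \<le> \<kappa> * C u" using Cmono su kap by (intro mult_left_mono) auto
      then show ?thesis using su True by (auto simp: K_def)
    next
      case False
      then show ?thesis using Kle[of s] su by (auto simp: K_def)
    qed
  qed
  have Klc: "\<And>s. s > 0 \<Longrightarrow> (K \<longlongrightarrow> K s) (at_left s)"
  proof -
    fix s :: real assume s: "s > 0"
    show "(K \<longlongrightarrow> K s) (at_left s)"
    proof (cases "s \<le> t0")
      case True
      have ev: "eventually (\<lambda>y. (\<lambda>y. \<kappa> * C y) y = K y) (at_left s)"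
        using eventually_at_left_real[OF s] by eventually_elim (use True in \<open>auto simp: K_def\<close>)
      have "((\<lambda>y. \<kappa> * C y) \<longlongrightarrow> \<kappa> * C s) (at_left s)"
        using Clc s by (intro tendsto_mult tendsto_const) auto
      then have "(K \<longlongrightarrow> \<kappa> * C s) (at_left s)" by (rule tendsto_cong[OF ev, THEN iffD1])
      then show ?thesis using True s by (simp add: K_def)
    next
      case False
      then have "t0 < s" by simp
      have ev: "eventually (\<lambda>y. (\<lambda>y. \<kappa>) y = K y) (at_left s)"
        using eventually_at_left_real[OF \<open>t0 < s\<close>] by eventually_elim (use t0 in \<open>auto simp: K_def\<close>)
      have "((\<lambda>y. \<kappa>) \<longlongrightarrow> \<kappa>) (at_left s)" by simp
      then have "(K \<longlongrightarrow> \<kappa>) (at_left s)" by (rule tendsto_cong[OF ev, THEN iffD1])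
      then show ?thesis using False s by (simp add: K_def)
    qed
  qed
  have Klt: "\<exists>s>0. K s < 1"
    by (rule exI[of _ "t0 + 1"]) (use t0 kap in \<open>auto simp: K_def\<close>)
  have KK: "K t' * K s * M m (x m i) (x m j) (max t' s) \<le> M n (x n i) (x n j) (max t' s)"
    if nm: "n \<in> S'" "m \<in> S'" and ts: "t' > 0" "s > 0" and ij: "i \<in> {1..NN}" "j \<in> {1..NN}" for n m t' s i j
  proof -
    let ?u = "max t' s"
    let ?Pn = "M n (x n i) (x n j) ?u" and ?Pm = "M m (x m i) (x m j) ?u"
    have u: "?u > 0" using ts by auto
    have bm: "0 \<le> ?Pm" "?Pm \<le> 1" using fm_bounds[OF fm xin[OF ij(1)] xin[OF ij(2)]] u by auto
    have kk0: "0 \<le> K t' * K s" using K01 by simp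
    show ?thesis
    proof (cases "?u \<le> t0")
      case True
      have "t' \<le> t0" using True by simp
      then have "K t' \<le> C t'" using KleC[of t'] ts by simp
      moreover have "C t' \<le> C ?u" using Cmono ts by simp
      ultimately have "K t' \<le> C ?u" by linarith
      moreover have "K s \<le> 1" using K01 by simp
      ultimately have "K t' * K s \<le> C ?u * 1" using K01 by (intro mult_mono) (auto simp: Cpos u less_imp_le)
      then have "K t' * K s * ?Pm \<le> C ?u * 1" using bm kk0 Cpos[OF u]
        by (metis mult.right_neutral mult_mono' order_trans)
      also have "\<dots> \<le> ?Pn" using Cle[OF u xin[OF ij(1)] xin[OF ij(2)]] by simp
      finally show ?thesis .
    next
      case False
      have "K t' * K s \<le> \<kappa> * \<kappa>" using Kle K01 kap by (intro mult_mono) auto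
      then have "K t' * K s * ?Pm \<le> \<kappa>^2 * ?Pm" using bm by (simp add: power2_eq_square mult_right_mono)
      also have "\<dots> \<le> ?Pn"
      proof (cases "?Pn < ?Pm")
        case True
        have rt: "?Pn / ?Pm \<ge> P n i j / P m i j"
          using ratio False True ij unfolding P_def by auto
        have pm0: "P m i j > 0" using P01[OF ij, of m] c by auto
        have "\<kappa>^2 \<le> P n i j / P m i j" using close[OF nm ij] pm0 by (simp add: field_simps)
        also have "\<dots> \<le> ?Pn / ?Pm" by (rule rt)
        finally have "\<kappa>^2 \<le> ?Pn / ?Pm" .
        moreover have "?Pm > 0" using Cle[OF u xin[OF ij(1)] xin[OF ij(2)], of m] Cpos[OF u] by linarith
        ultimately show ?thesis by (simp add: field_simps)
      next
        case False
        have "\<kappa>^2 * ?Pm \<le> 1 * ?Pm" using kap2 bm by (intro mult_right_mono) auto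
        then show ?thesis using False by simp
      qed
      finally show ?thesis .
    qed
  qed
  have NN1: "NN \<ge> 1"
  proof -
    obtain y where "y \<in> X 0" using ne by blast
    then obtain i where "i \<in> {1..NN}" using netc by blast
    then show ?thesis by simp
  qed
  have main: "MGH (X n) (M n) (X m) (M m) s > (1 - \<epsilon>)^2" if nm: "n \<in> S'" "m \<in> S'" and s: "s \<ge> t" for n m s
  proof -
    interpret L: two_spaces "X n" "M n" "X m" "M m" "x n" "x m" NN K
      by unfold_locales (use fm na NN1 xin K01 Kmono Klc Klt KK[OF nm] KK[OF nm(2,1)] in auto)
    have s0: "s > 0" "t0 \<le> s" using s t0 by auto
    have Ks: "K s = \<kappa>" using s t0 by (auto simp: K_def)
    have adm: "admissible (X n) (M n) (X m) (M m) L.JM" by (rule L.JM_admissible)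
    then have fmJ: "fuzzy_metric (Inl ` X n \<union> Inr ` X m) L.JM" by (simp add: admissible_def)
    have "(1 - \<epsilon>) * \<kappa> \<le> HM L.JM (Inl ` X n) (Inr ` X m) s"
    proof (rule HM_ge[OF fmJ ne ne], use s0 in simp)
      show "\<forall>y\<in>X n. \<exists>z\<in>X m. (1 - \<epsilon>) * \<kappa> \<le> L.JM (Inl y) (Inr z) s"
      proof
        fix y assume y: "y \<in> X n"
        obtain i where i: "i \<in> {1..NN}" "M n y (x n i) t0 > 1 - \<epsilon>" using netc[OF y] by blast
        have "M n y (x n i) t0 \<le> M n y (x n i) s" using na_mono[OF fm na y xin[OF i(1)]] s0 t0 by simp
        moreover have "M m (x m i) (x m i) s = 1" using fm_refl[OF fm xin[OF i(1)] s0(1)] .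
        moreover have "M n y (x n i) s * K s * M m (x m i) (x m i) s \<le> L.F y (x m i) s" by (rule L.F_ge[OF i(1)])
        ultimately have "(1 - \<epsilon>) * \<kappa> \<le> L.F y (x m i) s"
        proof -
          assume m1: "M n y (x n i) t0 \<le> M n y (x n i) s" and m2: "M m (x m i) (x m i) s = 1"
            and m3: "M n y (x n i) s * K s * M m (x m i) (x m i) s \<le> L.F y (x m i) s"
          have "1 - \<epsilon> \<le> M n y (x n i) s" using m1 i(2) by linarith
          then have "(1 - \<epsilon>) * \<kappa> \<le> M n y (x n i) s * \<kappa>" using kap by (intro mult_right_mono) auto
          also have "\<dots> = M n y (x n i) s * K s * M m (x m i) (x m i) s" using Ks m2 by simp
          finally show ?thesis using m3 by linarith
        qed
        then show "\<exists>z\<in>X m. (1 - \<epsilon>) * \<kappa> \<le> L.JM (Inl y) (Inr z) s" using xin[OF i(1)] by auto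
      qed
      show "\<forall>z\<in>X m. \<exists>y\<in>X n. (1 - \<epsilon>) * \<kappa> \<le> L.JM (Inl y) (Inr z) s"
      proof
        fix z assume z: "z \<in> X m"
        obtain i where i: "i \<in> {1..NN}" "M m z (x m i) t0 > 1 - \<epsilon>" using netc[OF z] by blast
        have "M m z (x m i) t0 \<le> M m z (x m i) s" using na_mono[OF fm na z xin[OF i(1)]] s0 t0 by simp
        moreover have "M m z (x m i) s = M m (x m i) z s" using fm_sym[OF fm z xin[OF i(1)]] s0 by simp
        moreover have "M n (x n i) (x n i) s = 1" using fm_refl[OF fm xin[OF i(1)] s0(1)] .
        moreover have "M n (x n i) (x n i) s * K s * M m (x m i) z s \<le> L.F (x n i) z s" by (rule L.F_ge[OF i(1)])
        ultimately have "(1 - \<epsilon>) * \<kappa> \<le> L.F (x n i) z s"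
        proof -
          assume m1: "M m z (x m i) t0 \<le> M m z (x m i) s" and m4: "M m z (x m i) s = M m (x m i) z s"
            and m2: "M n (x n i) (x n i) s = 1"
            and m3: "M n (x n i) (x n i) s * K s * M m (x m i) z s \<le> L.F (x n i) z s"
          have "1 - \<epsilon> \<le> M m (x m i) z s" using m1 m4 i(2) by linarith
          then have "(1 - \<epsilon>) * \<kappa> \<le> M m (x m i) z s * \<kappa>" using kap by (intro mult_right_mono) auto
          also have "\<dots> = M n (x n i) (x n i) s * K s * M m (x m i) z s" using Ks m2 by simp
          finally show ?thesis using m3 by linarith
        qed
        then show "\<exists>y\<in>X n. (1 - \<epsilon>) * \<kappa> \<le> L.JM (Inl y) (Inr z) s" using xin[OF i(1)] by auto
      qed
    qed
    also have "\<dots> \<le> MGH (X n) (M n) (X m) (M m) s" by (rule MGH_ge[OF adm ne ne]) (use s0 in simp)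
    finally have ge: "(1 - \<epsilon>) * \<kappa> \<le> MGH (X n) (M n) (X m) (M m) s" .
    have "(1 - \<epsilon>)^2 < (1 - \<epsilon>) * \<kappa>" using kap eps by (simp add: power2_eq_square)
    then show ?thesis using ge by linarith
  qed
  show ?thesis
    by (rule exI[of _ S']) (use n0 main in \<open>auto simp: S'_def\<close>)
qed





lemma diag:
  fixes Q :: "nat \<Rightarrow> nat set \<Rightarrow> bool"
  assumes H: "\<And>k S. infinite S \<Longrightarrow> \<exists>S'\<subseteq>S. infinite S' \<and> Q k S'"
  shows "\<exists>r. strict_mono r \<and> (\<forall>k. \<exists>S. Q k S \<and> (\<forall>j\<ge>k. r j \<in> S))"
proof -
  have "\<forall>k. \<forall>S. \<exists>S'. infinite S \<longrightarrow> S' \<subseteq> S \<and> infinite S' \<and> Q k S'" using H by blast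
  then obtain f where f: "\<And>k S. infinite S \<Longrightarrow> f k S \<subseteq> S \<and> infinite (f k S) \<and> Q k (f k S)"
    by metis
  define T where "T k = rec_nat (f 0 UNIV) (\<lambda>k S. f (Suc k) S) k" for k
  have T0: "T 0 = f 0 UNIV" and TS: "\<And>k. T (Suc k) = f (Suc k) (T k)" by (simp_all add: T_def)
  have Tinf: "infinite (T k)" for k
    by (induction k) (use f T0 TS infinite_UNIV_nat in auto)
  have TQ: "Q k (T k)" for k
    by (cases k) (use f T0 TS Tinf infinite_UNIV_nat in auto)
  have Tdec: "T (Suc k) \<subseteq> T k" for k using f TS Tinf by auto
  have Tle: "k \<le> j \<Longrightarrow> T j \<subseteq> T k" for k j
    by (rule lift_Suc_antimono_le[of T]) (use Tdec in auto)
  define r where "r k = rec_nat (SOME n. n \<in> T 0) (\<lambda>k p. SOME n. n \<in> T (Suc k) \<and> p < n) k" for k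
  have ex: "\<exists>n. n \<in> T k \<and> p < n" for k p using Tinf[of k] unfolding infinite_nat_iff_unbounded by blast
  have r0: "r 0 \<in> T 0" using someI_ex[OF ex[of 0 0]] by (auto simp: r_def intro: someI)
  have rS: "r (Suc k) \<in> T (Suc k) \<and> r k < r (Suc k)" for k
    using someI_ex[OF ex[of "Suc k" "r k"]] by (simp add: r_def)
  have rT: "r k \<in> T k" for k by (cases k) (use r0 rS in auto)
  have sm: "strict_mono r" by (rule strict_mono_Suc_iff[THEN iffD2]) (use rS in auto)
  show ?thesis
    by (rule exI[of _ r]) (use sm TQ rT Tle in blast)
qed





theorem mainTheorem8:
  fixes X :: "nat \<Rightarrow> 'a set" and M :: "nat \<Rightarrow> 'a \<Rightarrow> 'a \<Rightarrow> real \<Rightarrow> real"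
  assumes spaces: "\<And>n. X n \<noteq> {} \<and> fuzzy_metric (X n) (M n) \<and>
                        non_archimedean (X n) (M n) \<and> fcompact (X n) (M n)"
    and cond1: "\<exists>C :: real \<Rightarrow> real.
          (\<forall>s t. 0 < s \<longrightarrow> s \<le> t \<longrightarrow> C s \<le> C t) \<and>
          (\<forall>s>0. (C \<longlongrightarrow> C s) (at_left s)) \<and>
          (\<forall>s>0. C s \<le> 1) \<and>
          (\<forall>s>0. \<forall>n. 0 < C s \<and> C s \<le> fdiam (X n) (M n) s)"
    and cond23: "\<exists>N :: real \<Rightarrow> real \<Rightarrow> nat.
          (\<forall>t>0. \<forall>\<epsilon>. 0 < \<epsilon> \<and> \<epsilon> < 1 \<longrightarrow> (\<forall>n. fcov (X n) (M n) \<epsilon> t \<le> N \<epsilon> t)) \<and>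
          (\<forall>t>0. \<forall>\<epsilon>. 0 < \<epsilon> \<and> \<epsilon> < 1 \<longrightarrow>
             (\<exists>x :: nat \<Rightarrow> nat \<Rightarrow> 'a.
                (\<forall>n. is_net (X n) (M n) (x n) (N \<epsilon> t) t \<epsilon>) \<and>
                (\<forall>n m s i j. s > t \<longrightarrow> i \<in> {1..N \<epsilon> t} \<longrightarrow> j \<in> {1..N \<epsilon> t} \<longrightarrow>
                   M n (x n i) (x n j) s < M m (x m i) (x m j) s \<longrightarrow>
                   M n (x n i) (x n j) s / M m (x m i) (x m j) s
                     \<ge> M n (x n i) (x n j) t / M m (x m i) (x m j) t)))"
  shows "(\<forall>t>0. \<forall>\<epsilon>. 0 < \<epsilon> \<and> \<epsilon> < 1 \<longrightarrow>
            (\<exists>r :: nat \<Rightarrow> nat. strict_mono r \<and>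
               (\<forall>j k. MGH (X (r j)) (M (r j)) (X (r k)) (M (r k)) t > (1 - \<epsilon>)^2)))
       \<and> (\<exists>r :: nat \<Rightarrow> nat. strict_mono r \<and> GH_Cauchy (\<lambda>k. X (r k)) (\<lambda>k. M (r k)))"
proof -
  obtain C :: "real \<Rightarrow> real" where Cmono: "\<forall>s t. 0 < s \<longrightarrow> s \<le> t \<longrightarrow> C s \<le> C t"
    and Clc: "\<forall>s>0. (C \<longlongrightarrow> C s) (at_left s)" and C1: "\<forall>s>0. C s \<le> 1"
    and Cd: "\<forall>s>0. \<forall>n. 0 < C s \<and> C s \<le> fdiam (X n) (M n) s"
    using cond1 by blast
  obtain N :: "real \<Rightarrow> real \<Rightarrow> nat" where
    N2: "\<forall>t>0. \<forall>\<epsilon>. 0 < \<epsilon> \<and> \<epsilon> < 1 \<longrightarrow>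
             (\<exists>x :: nat \<Rightarrow> nat \<Rightarrow> 'a.
                (\<forall>n. is_net (X n) (M n) (x n) (N \<epsilon> t) t \<epsilon>) \<and>
                (\<forall>n m s i j. s > t \<longrightarrow> i \<in> {1..N \<epsilon> t} \<longrightarrow> j \<in> {1..N \<epsilon> t} \<longrightarrow>
                   M n (x n i) (x n j) s < M m (x m i) (x m j) s \<longrightarrow>
                   M n (x n i) (x n j) s / M m (x m i) (x m j) s
                     \<ge> M n (x n i) (x n j) t / M m (x m i) (x m j) t))"
    using cond23 by blast
  have sp: "\<And>n. X n \<noteq> {} \<and> fuzzy_metric (X n) (M n) \<and> non_archimedean (X n) (M n)"
    using spaces by blast
  have step: "\<exists>S'\<subseteq>S. infinite S' \<and> (\<forall>n\<in>S'. \<forall>m\<in>S'. \<forall>s\<ge>t. MGH (X n) (M n) (X m) (M m) s > (1 - \<epsilon>)^2)"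
    if t: "t > 0" and e: "0 < \<epsilon>" "\<epsilon> < 1" and S: "infinite S" for t \<epsilon> and S :: "nat set"
  proof -
    have t2: "t / 2 > 0" "t / 2 < t" using t by auto
    obtain x :: "nat \<Rightarrow> nat \<Rightarrow> 'a" where
      xn: "\<forall>n. is_net (X n) (M n) (x n) (N \<epsilon> (t/2)) (t/2) \<epsilon>" and
      xr: "\<forall>n m s i j. s > t/2 \<longrightarrow> i \<in> {1..N \<epsilon> (t/2)} \<longrightarrow> j \<in> {1..N \<epsilon> (t/2)} \<longrightarrow>
                   M n (x n i) (x n j) s < M m (x m i) (x m j) s \<longrightarrow>
                   M n (x n i) (x n j) s / M m (x m i) (x m j) s
                     \<ge> M n (x n i) (x n j) (t/2) / M m (x m i) (x m j) (t/2)"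
      using N2 t2(1) e by blast
    show ?thesis by (rule key[OF sp Cmono Clc C1 Cd xn xr t2 e S])
  qed
  have part1: "\<forall>t>0. \<forall>\<epsilon>. 0 < \<epsilon> \<and> \<epsilon> < 1 \<longrightarrow>
            (\<exists>r :: nat \<Rightarrow> nat. strict_mono r \<and>
               (\<forall>j k. MGH (X (r j)) (M (r j)) (X (r k)) (M (r k)) t > (1 - \<epsilon>)^2))"
  proof (intro allI impI)
    fix t \<epsilon> :: real assume t: "t > 0" and e: "0 < \<epsilon> \<and> \<epsilon> < 1"
    obtain S' where S': "infinite S'" "\<forall>n\<in>S'. \<forall>m\<in>S'. \<forall>s\<ge>t. MGH (X n) (M n) (X m) (M m) s > (1 - \<epsilon>)^2"
      using step[OF t conjunct1[OF e] conjunct2[OF e] infinite_UNIV_nat] by (elim exE conjE) (rule that)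
    show "\<exists>r :: nat \<Rightarrow> nat. strict_mono r \<and>
               (\<forall>j k. MGH (X (r j)) (M (r j)) (X (r k)) (M (r k)) t > (1 - \<epsilon>)^2)"
    proof (intro exI[of _ "enumerate S'"] conjI allI)
      show "strict_mono (enumerate S')" by (rule strict_mono_enumerate[OF S'(1)])
      fix j k
      have ej: "enumerate S' j \<in> S'" "enumerate S' k \<in> S'" using enumerate_in_set[OF S'(1)] by auto
      show "MGH (X (enumerate S' j)) (M (enumerate S' j)) (X (enumerate S' k)) (M (enumerate S' k)) t > (1 - \<epsilon>)^2"
        using S'(2) ej by auto
    qed
  qed
  define Q where "Q k S = (\<forall>n\<in>S. \<forall>m\<in>S. \<forall>s\<ge>1 / (real k + 1).
      MGH (X n) (M n) (X m) (M m) s > (1 - 1 / (real k + 2))^2)" for k S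
  have HQ: "\<exists>S'\<subseteq>S. infinite S' \<and> Q k S'" if "infinite S" for k S
  proof -
    have "1 / (real k + 1) > 0" "0 < 1 / (real k + 2)" "1 / (real k + 2) < 1" by (auto simp: field_simps)
    from step[OF this that] show ?thesis unfolding Q_def by blast
  qed
  obtain r where r: "strict_mono r" and rQ: "\<forall>k. \<exists>S. Q k S \<and> (\<forall>j\<ge>k. r j \<in> S)"
    using diag[of Q] HQ by blast
  have "GH_Cauchy (\<lambda>k. X (r k)) (\<lambda>k. M (r k))"
    unfolding GH_Cauchy_def
  proof (intro allI impI)
    fix t \<epsilon> :: real assume t: "t > 0" and e: "0 < \<epsilon> \<and> \<epsilon> < 1"
    obtain k :: nat where k: "2 / \<epsilon> + 1 / t < real k" using reals_Archimedean2 by blast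
    have k1: "1 / (real k + 1) \<le> t"
    proof -
      have "2 / \<epsilon> > 0" "1 / t > 0" using e t by auto
      then have "1 / t < real k + 1" using k by linarith
      then have "1 < (real k + 1) * t" using t by (simp add: field_simps)
      then show ?thesis using t by (simp add: field_simps)
    qed
    have k2: "1 - \<epsilon> \<le> (1 - 1 / (real k + 2))^2"
    proof -
      have "2 / \<epsilon> > 0" "1 / t > 0" using e t by auto
      then have "2 / \<epsilon> < real k + 2" using k by linarith
      then have "2 < (real k + 2) * \<epsilon>" using e by (simp add: field_simps)
      then have a: "2 / (real k + 2) \<le> \<epsilon>" by (simp add: field_simps)
      define d where "d = 1 / (real k + 2)"
      have a2: "2 * d \<le> \<epsilon>" using a by (simp add: d_def)
      have "(1 - d)^2 = 1 - 2 * d + d^2" by (simp add: power2_eq_square algebra_simps)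
      moreover have "d^2 \<ge> 0" by simp
      ultimately have "1 - \<epsilon> \<le> (1 - d)^2" using a2 by linarith
      then show ?thesis by (simp add: d_def)
    qed
    obtain S where S: "Q k S" "\<forall>j\<ge>k. r j \<in> S" using rQ by blast
    show "\<exists>n0. \<forall>n\<ge>n0. \<forall>m\<ge>n0. MGH (X (r n)) (M (r n)) (X (r m)) (M (r m)) t > 1 - \<epsilon>"
    proof (intro exI[of _ k] allI impI)
      fix n m assume "k \<le> n" "k \<le> m"
      then have "r n \<in> S" "r m \<in> S" using S by auto
      then have "MGH (X (r n)) (M (r n)) (X (r m)) (M (r m)) t > (1 - 1 / (real k + 2))^2"
        using S(1) k1 unfolding Q_def by blast
      then show "MGH (X (r n)) (M (r n)) (X (r m)) (M (r m)) t > 1 - \<epsilon>" using k2 by linarith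
    qed
  qed
  then show ?thesis using part1 r by blast
qed


end
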